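(* Consider the system $S'=1-IS-S$, $I'=IS-I$ on $\mathbb R^2$. For $c\in[0,1)$ let $\Gamma_c=\{(S,I)\in\mathbb R^2: S\ge0,\ I\ge0,\ S+I\le1-c\}$. Then for every $c\in(0,1)$ the system has the conditional Lipschitz shadowing property in $\Gamma_c$, but it does not have the conditional Lipschitz shadowing property in $\Gamma_0$.
   Context: For continuous $g\colon[0,\infty)\times\mathbb R^n\to\mathbb R^n$ and $\tau\in(0,\infty]$, a pseudosolution of $x'=g(t,x)$ on $[0,\tau)$ is a $C^1$ map $y\colon[0,\tau)\to\mathbb R^n$ with $\sigma_y:=\sup_{0\le t<\tau}|y'(t)-g(t,y(t))|<\infty$ (for a fixed norm $|\cdot|$ on $\mathbb R^n$; the property below does not depend on the norm). The equation has the conditional Lipschitz shadowing property in $H\neq\emptyset$ if there exist $\varepsilon_0,\kappa>0$ such that whenever $0<\varepsilon\le\varepsilon_0$ and $y$ is a pseudosolution on $[0,\tau)$ ($\tau\in(0,\infty]$) with $\sigma_y\le\varepsilon$ and $y(t)\in H$ for all $t\in[0,\tau)$, there is a solution $x$ of the equation defined on $[0,\tau)$ with $\sup_{0\le t<\tau}|x(t)-y(t)|\le\kappa\varepsilon$. *)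

theory Defs
  imports "HOL-Analysis.Analysis" "HOL-Library.Extended_Real"
begin

definition tdom :: "ereal \<Rightarrow> real set" where
  "tdom \<tau> = {t. 0 \<le> t \<and> ereal t < \<tau>}"

text \<open>y is a C^1 pseudosolution of x' = g(t,x) on [0,tau) with sigma_y \<le> eps
  (sigma_y is a supremum, so sigma_y \<le> eps iff the pointwise defect is \<le> eps).\<close>
definition pseudosol_le ::
  "(real \<Rightarrow> 'a::real_normed_vector \<Rightarrow> 'a) \<Rightarrow> ereal \<Rightarrow> (real \<Rightarrow> 'a) \<Rightarrow> real \<Rightarrow> bool" where
  "pseudosol_le g \<tau> y \<epsilon> \<longleftrightarrow>
     (\<exists>y'. (\<forall>t\<in>tdom \<tau>. (y has_vector_derivative y' t) (at t within tdom \<tau>))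
         \<and> continuous_on (tdom \<tau>) y'
         \<and> (\<forall>t\<in>tdom \<tau>. norm (y' t - g t (y t)) \<le> \<epsilon>))"

definition is_solution ::
  "(real \<Rightarrow> 'a::real_normed_vector \<Rightarrow> 'a) \<Rightarrow> ereal \<Rightarrow> (real \<Rightarrow> 'a) \<Rightarrow> bool" where
  "is_solution g \<tau> x \<longleftrightarrow>
     (\<forall>t\<in>tdom \<tau>. (x has_vector_derivative g t (x t)) (at t within tdom \<tau>))"

definition cond_lip_shadowing ::
  "(real \<Rightarrow> 'a::real_normed_vector \<Rightarrow> 'a) \<Rightarrow> 'a set \<Rightarrow> bool" where
  "cond_lip_shadowing g H \<longleftrightarrow>
     (\<exists>\<epsilon>0>0. \<exists>\<kappa>>0. \<forall>\<epsilon> \<tau> y.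
        0 < \<epsilon> \<and> \<epsilon> \<le> \<epsilon>0 \<and> 0 < \<tau> \<and> pseudosol_le g \<tau> y \<epsilon>
        \<and> (\<forall>t\<in>tdom \<tau>. y t \<in> H)
        \<longrightarrow> (\<exists>x. is_solution g \<tau> x \<and> (\<forall>t\<in>tdom \<tau>. norm (x t - y t) \<le> \<kappa> * \<epsilon>)))"

text \<open>The SI system S' = 1 - IS - S, I' = IS - I on R^2, with S = x$1, I = x$2.\<close>
definition SI_field :: "real \<Rightarrow> real^2 \<Rightarrow> real^2" where
  "SI_field t x = vector [1 - x$2 * x$1 - x$1, x$2 * x$1 - x$2]"

definition Gamma_set :: "real \<Rightarrow> (real^2) set" where
  "Gamma_set c = {x. 0 \<le> x$1 \<and> 0 \<le> x$2 \<and> x$1 + x$2 \<le> 1 - c}"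

end

theory Submission
  imports Defs
begin


lemma deriv_upper:
  fixes f f' :: "real \<Rightarrow> real"
  assumes "a \<le> b" "\<And>s. s \<in> {a..b} \<Longrightarrow> (f has_real_derivative f' s) (at s within {a..b})"
    "\<And>s. s\<in>{a..b} \<Longrightarrow> f' s \<le> B"
  shows "f b - f a \<le> B*(b-a)"
proof -
  obtain x where x: "x\<in>{a..b}" "f b - f a = f' x * (b-a)"
    using mvt_very_simple[OF assms(1), of f "\<lambda>s. (*) (f' s)"] assms(2)
    by (auto simp: has_field_derivative_def)
  then show ?thesis using assms(1) assms(3)[OF x(1)] by (simp add: mult_right_mono)
qed

lemma deriv_lower:
  fixes f f' :: "real \<Rightarrow> real"
  assumes "a \<le> b" "\<And>s. s \<in> {a..b} \<Longrightarrow> (f has_real_derivative f' s) (at s within {a..b})"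
    "\<And>s. s\<in>{a..b} \<Longrightarrow> B \<le> f' s"
  shows "B*(b-a) \<le> f b - f a"
proof -
  obtain x where x: "x\<in>{a..b}" "f b - f a = f' x * (b-a)"
    using mvt_very_simple[OF assms(1), of f "\<lambda>s. (*) (f' s)"] assms(2)
    by (auto simp: has_field_derivative_def)
  then show ?thesis using assms(1) assms(3)[OF x(1)] by (simp add: mult_right_mono)
qed

lemma deriv_abs:
  fixes f f' :: "real \<Rightarrow> real"
  assumes "a \<le> b" "\<And>s. s \<in> {a..b} \<Longrightarrow> (f has_real_derivative f' s) (at s within {a..b})"
    "\<And>s. s\<in>{a..b} \<Longrightarrow> \<bar>f' s\<bar> \<le> B"
  shows "\<bar>f b - f a\<bar> \<le> B*(b-a)"
proof -
  have "f b - f a \<le> B*(b-a)" using deriv_upper[OF assms(1,2)] assms(3) by (meson abs_le_D1)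
  moreover have "-B*(b-a) \<le> f b - f a" using deriv_lower[OF assms(1,2)] assms(3)
    by (metis abs_le_D2 minus_le_iff)
  ultimately show ?thesis by linarith
qed

lemma comp_deriv:
  fixes y :: "real \<Rightarrow> real^2"
  assumes "(y has_vector_derivative d) (at t within S)"
  shows "((\<lambda>s. y s $ i) has_real_derivative d $ i) (at t within S)"
  using bounded_linear.has_vector_derivative[OF bounded_linear_vec_nth assms, of i]
  by (simp add: has_real_derivative_iff_has_vector_derivative)

lemma part2: "\<not> cond_lip_shadowing SI_field (Gamma_set 0)"
proof
  assume "cond_lip_shadowing SI_field (Gamma_set 0)"
  then obtain e0 k where e0: "e0 > 0" and k: "k > 0" and H: "\<And>\<epsilon> \<tau> y.
        0 < \<epsilon> \<and> \<epsilon> \<le> e0 \<and> 0 < \<tau> \<and> pseudosol_le SI_field \<tau> y \<epsilon>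
        \<and> (\<forall>t\<in>tdom \<tau>. y t \<in> Gamma_set 0)
        \<Longrightarrow> (\<exists>x. is_solution SI_field \<tau> x \<and> (\<forall>t\<in>tdom \<tau>. norm (x t - y t) \<le> k * \<epsilon>))"
    unfolding cond_lip_shadowing_def by blast
  define d where "d = min (1/2) (min (sqrt (e0/2)) (1/(4*k)))"
  have d0: "0 < d" using e0 k by (auto simp: d_def)
  have d1: "d \<le> 1/2" by (simp add: d_def)
  have "d \<le> sqrt (e0/2)" by (simp add: d_def)
  hence "d^2 \<le> e0/2" using d0 by (metis power_mono real_sqrt_pow2 e0 less_eq_real_def half_gt_zero_iff)
  hence de: "2*d^2 \<le> e0" by simp
  have "d \<le> 1/(4*k)" by (simp add: d_def)
  hence dk: "k*(2*d^2) \<le> d/2" using k d0 by (simp add: field_simps power2_eq_square)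
  define y0 :: "real^2" where "y0 = vector [1-d, d]"
  have td: "tdom PInfty = {t. 0 \<le> t}" by (simp add: tdom_def)
  have ps: "pseudosol_le SI_field PInfty (\<lambda>t. y0) (2*d^2)"
    unfolding pseudosol_le_def
  proof (intro exI[of _ "\<lambda>t. 0"] conjI ballI)
    fix t
    have "norm (0 - SI_field t y0) \<le> \<bar>(0 - SI_field t y0)$1\<bar> + \<bar>(0 - SI_field t y0)$2\<bar>"
      using norm_le_l1_cart[of "0 - SI_field t y0"] by (simp add: sum_2)
    also have "\<dots> = 2*d^2" by (simp add: SI_field_def y0_def algebra_simps power2_eq_square)
    finally show "norm (0 - SI_field t ((\<lambda>t. y0) t)) \<le> 2*d^2" by simp
  qed (auto intro: continuous_intros)
  have yin: "y0 \<in> Gamma_set 0" using d1 d0 by (simp add: Gamma_set_def y0_def)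
  obtain x where xs: "is_solution SI_field PInfty x" and xb: "\<And>t. t \<ge> 0 \<Longrightarrow> norm (x t - y0) \<le> k*(2*d^2)"
    using H[of "2*d^2" PInfty "\<lambda>t. y0"] ps yin d0 de td by auto
  have c1: "\<bar>x t $ 1 - (1-d)\<bar> \<le> d/2" if "t\<ge>0" for t
    using component_le_norm_cart[of "x t - y0" 1] xb[OF that] dk by (simp add: y0_def)
  have c2: "\<bar>x t $ 2 - d\<bar> \<le> d/2" if "t\<ge>0" for t
    using component_le_norm_cart[of "x t - y0" 2] xb[OF that] dk by (simp add: y0_def)
  define T where "T = 8/d"
  have T0: "0 \<le> T" using d0 by (simp add: T_def)
  have "(\<lambda>s. x s $ 2) T - (\<lambda>s. x s $ 2) 0 \<le> (-(d*d/4)) * (T - 0)"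
  proof (rule deriv_upper[OF T0])
    fix s assume s: "s \<in> {0..T}"
    have "(x has_vector_derivative SI_field s (x s)) (at s within {0..T})"
      using xs s unfolding is_solution_def td
      by (auto intro: has_vector_derivative_within_subset)
    thus "((\<lambda>s. x s $ 2) has_real_derivative SI_field s (x s) $ 2) (at s within {0..T})"
      by (rule comp_deriv)
    have a1: "\<bar>x s $ 1 - (1-d)\<bar> \<le> d/2" "\<bar>x s $ 2 - d\<bar> \<le> d/2" using c1[of s] c2[of s] s by auto
    have a: "x s $ 2 \<ge> d/2" "x s $ 1 - 1 \<le> -(d/2)" using a1 unfolding abs_le_iff by linarith+
    have "x s $ 2 * (x s $ 1 - 1) \<le> (d/2) * (x s $ 1 - 1)"
      using mult_right_mono_neg[of "d/2" "x s $ 2" "x s $ 1 - 1"] a d0 by linarith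
    also have "\<dots> \<le> (d/2)*(-(d/2))" using a d0 by (intro mult_left_mono) auto
    finally show "SI_field s (x s) $ 2 \<le> -(d*d/4)" by (simp add: SI_field_def algebra_simps)
  qed
  moreover have "(-(d*d/4)) * (T - 0) = -2*d" using d0 by (simp add: T_def field_simps)
  ultimately have "x T $ 2 - x 0 $ 2 \<le> -2*d" by linarith
  moreover have "\<bar>x 0 $ 2 - d\<bar> \<le> d/2" "\<bar>x T $ 2 - d\<bar> \<le> d/2" using c2[of 0] c2[OF T0] by auto
  ultimately show False using d0 unfolding abs_le_iff by linarith
qed



lemma part1:
  assumes c: "0 < c" "c < 1"
  shows "cond_lip_shadowing SI_field (Gamma_set c)"
proof -
  define T where "T = 2/c"
  define C1 where "C1 = 2*T*exp T"
  define K where "K = 1 + C1 + 2*T*exp(4*T)*(C1+1)"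
  have T0: "T > 0" using c by (simp add: T_def)
  have C10: "C1 \<ge> 0" using T0 by (simp add: C1_def)
  have K0: "K > 0" using T0 C10 by (simp add: K_def add_pos_nonneg)
  have main: "\<exists>x. is_solution SI_field \<tau> x \<and> (\<forall>t\<in>tdom \<tau>. norm (x t - y t) \<le> K * \<epsilon>)"
    if eps: "0 < \<epsilon>" "\<epsilon> \<le> c/4" and tau: "0 < \<tau>" and ps: "pseudosol_le SI_field \<tau> y \<epsilon>"
      and yH: "\<forall>t\<in>tdom \<tau>. y t \<in> Gamma_set c" for \<epsilon> \<tau> y
  proof -
    from ps obtain y' where dy: "\<And>t. t\<in>tdom \<tau> \<Longrightarrow> (y has_vector_derivative y' t) (at t within tdom \<tau>)"
      and err: "\<And>t. t\<in>tdom \<tau> \<Longrightarrow> norm (y' t - SI_field t (y t)) \<le> \<epsilon>"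
      unfolding pseudosol_le_def by blast
    have subset: "{0..t} \<subseteq> tdom \<tau>" if "t\<in>tdom \<tau>" for t
      using that unfolding tdom_def by (auto intro: order_le_less_trans[of "ereal _" "ereal t"])
    have t00: "0 \<in> tdom \<tau>" using tau by (simp add: tdom_def zero_ereal_def)
    have tdom0: "0 \<le> t" if "t \<in> tdom \<tau>" for t using that by (simp add: tdom_def)
    define e1 where "e1 s = (y' s - SI_field s (y s)) $ 1" for s
    define e2 where "e2 s = (y' s - SI_field s (y s)) $ 2" for s
    have e1b: "\<bar>e1 s\<bar> \<le> \<epsilon>" if "s\<in>tdom \<tau>" for s
      using component_le_norm_cart[of "y' s - SI_field s (y s)" 1] err[OF that] by (simp add: e1_def)
    have e2b: "\<bar>e2 s\<bar> \<le> \<epsilon>" if "s\<in>tdom \<tau>" for s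
      using component_le_norm_cart[of "y' s - SI_field s (y s)" 2] err[OF that] by (simp add: e2_def)
    have yd1: "((\<lambda>s. y s $ 1) has_real_derivative y' s $ 1) (at s within {0..t})"
      if "t\<in>tdom \<tau>" "s\<in>{0..t}" for t s
      using comp_deriv[OF has_vector_derivative_within_subset[OF dy subset[OF that(1)]]] that subset by blast
    have yd2: "((\<lambda>s. y s $ 2) has_real_derivative y' s $ 2) (at s within {0..t})"
      if "t\<in>tdom \<tau>" "s\<in>{0..t}" for t s
      using comp_deriv[OF has_vector_derivative_within_subset[OF dy subset[OF that(1)]]] that subset by blast
    have y'1: "y' s $1 = 1 - y s $2 * y s$1 - y s$1 + e1 s" for s by (simp add: e1_def SI_field_def)
    have y'2: "y' s $2 = y s $2 * y s $1 - y s $2 + e2 s" for s by (simp add: e2_def SI_field_def)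
    have yG: "0 \<le> y t$1" "0 \<le> y t$2" "y t$1 + y t$2 \<le> 1 - c" if "t\<in>tdom \<tau>" for t
      using yH that by (auto simp: Gamma_set_def)
    have tT: "t \<le> T" if t: "t\<in>tdom \<tau>" for t
    proof -
      have t0: "0 \<le> t" using tdom0[OF t] .
      have "(c/2)*(t-0) \<le> (\<lambda>s. y s $1 + y s $2) t - (\<lambda>s. y s $1 + y s$2) 0"
      proof (rule deriv_lower[OF t0])
        fix s assume s: "s\<in>{0..t}"
        show "((\<lambda>s. y s $1 + y s$2) has_real_derivative y' s $1 + y' s $2) (at s within {0..t})"
          using yd1[OF t s] yd2[OF t s] by (rule DERIV_add)
        have st: "s \<in> tdom \<tau>" using subset[OF t] s by blast
        show "c/2 \<le> y' s $1 + y' s $2" unfolding y'1 y'2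
          using e1b[OF st] e2b[OF st] yG[OF st] eps by (simp add: abs_le_iff) 
      qed
      hence "(c/2)*t \<le> 1" using yG[OF t] yG[OF t00] c by simp
      thus ?thesis using c by (simp add: T_def field_simps)
    qed
    define N0 where "N0 = y 0 $1 + y 0 $2"
    define I0 where "I0 = y 0 $2"
    have N0: "0 \<le> N0" "N0 \<le> 1" using yG[OF t00] c by (auto simp: N0_def)
    have I0: "0 \<le> I0" "I0 \<le> 1" using yG[OF t00] c by (auto simp: I0_def)
    define A where "A t = (N0-1)*(1 - exp(-t))" for t
    define E where "E t = exp (A t)" for t
    define F where "F t = integral {-1..t} E - integral {-1..0} E" for t
    define Ix where "Ix t = I0 * E t / (1 + I0 * F t)" for t
    define Nx where "Nx t = 1 + (N0-1)*exp(-t)" for t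
    define Sx where "Sx t = Nx t - Ix t" for t
    define x where "x t = Sx t *\<^sub>R (vector [1,0] :: real^2) + Ix t *\<^sub>R vector [0,1]" for t
    have x1: "x t $1 = Sx t" for t by (simp add: x_def)
    have x2: "x t $2 = Ix t" for t by (simp add: x_def)
    have contE: "continuous_on S E" for S by (auto simp: E_def A_def intro!: continuous_intros)
    have dE: "(E has_real_derivative E t * ((N0-1)*exp(-t))) (at t)" for t
    proof -
      have "((\<lambda>t. (N0-1)*(1 - exp(-t))) has_real_derivative (N0-1)*(0 - exp(-t)*(-1))) (at t)"
        by (intro DERIV_cmult DERIV_diff DERIV_const DERIV_fun_exp DERIV_minus DERIV_ident)
      then have "((\<lambda>t. exp ((N0-1)*(1 - exp(-t)))) has_real_derivative exp ((N0-1)*(1 - exp(-t))) * ((N0-1)*(0 - exp(-t)*(-1)))) (at t)"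
        by (rule DERIV_fun_exp)
      then show ?thesis unfolding E_def[abs_def] A_def by simp
    qed
    have dF: "(F has_real_derivative E t) (at t)" if t: "t \<ge> 0" for t
    proof -
      have "((\<lambda>u. integral {-1..u} E) has_real_derivative E t) (at t within {-1..t+1})"
        by (rule integral_has_real_derivative) (use contE t in auto)
      then have "((\<lambda>u. integral {-1..u} E) has_real_derivative E t) (at t)"
        using at_within_interior[of t "{-1..t+1}"] t by simp
      then show ?thesis unfolding F_def using DERIV_diff[OF _ DERIV_const] by fastforce
    qed
    have F0: "F 0 = 0" by (simp add: F_def)
    have Epos: "0 < E t" for t by (simp add: E_def)
    have Ebd: "E t \<le> 1" if "t \<ge> 0" for t
    proof -
      have "A t \<le> 0" unfolding A_def using N0 that by (intro mult_nonpos_nonneg) auto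
      thus ?thesis by (simp add: E_def)
    qed
    have Fpos: "F t \<ge> 0" if t: "t \<ge> 0" for t
    proof -
      have "0*(t-0) \<le> F t - F 0"
        by (rule deriv_lower[OF t, of F E 0]) (simp_all add: has_field_derivative_at_within dF less_imp_le[OF Epos])
      thus ?thesis using F0 by simp
    qed
    have den: "1 \<le> 1 + I0 * F t" if "t \<ge> 0" for t using Fpos[OF that] I0 by simp
    have Ibd: "0 \<le> Ix t" "Ix t \<le> 1" if t: "t \<ge> 0" for t
    proof -
      have d: "1 \<le> 1 + I0 * F t" using den[OF t] .
      show "0 \<le> Ix t" unfolding Ix_def using d I0 Epos[of t] by simp
      have "Ix t \<le> I0 * E t" unfolding Ix_def using d I0 Epos[of t]
        using mult_left_mono[OF d, of "I0*E t"] by (simp add: divide_le_eq)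
      also have "\<dots> \<le> 1" using I0 Ebd[OF t] Epos[of t] by (simp add: mult_le_one)
      finally show "Ix t \<le> 1" .
    qed
    have dI: "(Ix has_real_derivative Ix t * (Sx t - 1)) (at t)" if t: "t \<ge> 0" for t
    proof -
      have d: "1 + I0 * F t \<noteq> 0" using den[OF t] by linarith
      have "((\<lambda>t. I0 * E t / (1 + I0 * F t)) has_real_derivative
         ((I0 * (E t * ((N0-1)*exp(-t)))) * (1 + I0 * F t) - I0 * E t * (0 + I0 * E t)) / ((1 + I0 * F t)*(1 + I0 * F t))) (at t)"
        by (intro DERIV_divide DERIV_cmult DERIV_add DERIV_const dE dF t d)
      moreover have "((I0 * (E t * ((N0-1)*exp(-t)))) * (1 + I0 * F t) - I0 * E t * (0 + I0 * E t)) / ((1 + I0 * F t)*(1 + I0 * F t))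
          = Ix t * (Sx t - 1)"
        unfolding Sx_def Nx_def Ix_def using d by (simp add: field_simps)
      ultimately show ?thesis unfolding Ix_def[abs_def] by simp
    qed
    have dN: "(Nx has_real_derivative 1 - Nx t) (at t)" for t
    proof -
      have "((\<lambda>t. 1 + (N0-1)*exp(-t)) has_real_derivative 0 + (N0-1)*(exp(-t)*(-1))) (at t)"
        by (intro DERIV_cmult DERIV_add DERIV_const DERIV_fun_exp DERIV_minus DERIV_ident)
      then show ?thesis unfolding Nx_def[abs_def] by (simp add: algebra_simps)
    qed
    have sol: "is_solution SI_field \<tau> x"
      unfolding is_solution_def
    proof
      fix t assume t: "t \<in> tdom \<tau>"
      have t0: "0 \<le> t" using tdom0[OF t] .
      have "(x has_vector_derivative ((1 - Nx t - Ix t * (Sx t - 1)) *\<^sub>R (vector [1,0] :: real^2) + (Ix t * (Sx t - 1)) *\<^sub>R vector [0,1])) (at t)"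
      proof -
        have dS: "(Sx has_real_derivative (1 - Nx t) - Ix t*(Sx t - 1)) (at t)"
          unfolding Sx_def[abs_def] using DERIV_diff[OF dN dI[OF t0]] by (simp add: Sx_def)
        have "(x has_vector_derivative (Sx t *\<^sub>R 0 + ((1 - Nx t) - Ix t*(Sx t - 1)) *\<^sub>R (vector [1,0] :: real^2)) + (Ix t *\<^sub>R 0 + (Ix t*(Sx t -1)) *\<^sub>R vector [0,1])) (at t)"
          unfolding x_def[abs_def] by (intro has_vector_derivative_add has_vector_derivative_scaleR dS dI[OF t0] has_vector_derivative_const)
        then show ?thesis by (simp add: algebra_simps)
      qed
      moreover have "((1 - Nx t - Ix t * (Sx t - 1)) *\<^sub>R (vector [1,0] :: real^2) + (Ix t * (Sx t - 1)) *\<^sub>R vector [0,1]) = SI_field t (x t)"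
        unfolding vec_eq_iff forall_2 SI_field_def by (simp add: x1 x2, simp add: Sx_def algebra_simps)
      ultimately show "(x has_vector_derivative SI_field t (x t)) (at t within tdom \<tau>)"
        by (simp add: has_vector_derivative_at_within)
    qed
    define Ny where "Ny s = y s $1 + y s $2" for s
    have Dbd: "\<bar>Ny t - Nx t\<bar> \<le> C1*\<epsilon>" if t: "t\<in>tdom \<tau>" for t
    proof -
      have t0: "0 \<le> t" using tdom0[OF t] .
      define psi where "psi s = exp s * (Ny s - 1)" for s
      have "\<bar>psi t - psi 0\<bar> \<le> (exp T * (2*\<epsilon>)) * (t - 0)"
      proof (rule deriv_abs[OF t0])
        fix s assume s: "s\<in>{0..t}"
        have st: "s\<in>tdom \<tau>" using subset[OF t] s by blast
        have "(psi has_real_derivative exp s * (Ny s - 1) + (y' s $1 + y' s $2 - 0) * exp s) (at s within {0..t})"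
          unfolding psi_def[abs_def] Ny_def
          by (rule DERIV_mult[OF has_field_derivative_at_within[OF DERIV_exp] DERIV_diff[OF DERIV_add[OF yd1[OF t s] yd2[OF t s]] DERIV_const]])
        then show "(psi has_real_derivative exp s * (e1 s + e2 s)) (at s within {0..t})"
          by (rule DERIV_cong) (simp add: y'1 y'2 Ny_def algebra_simps)
        have "exp s \<le> exp T" using s tT[OF t] by simp
        moreover have "\<bar>e1 s + e2 s\<bar> \<le> 2*\<epsilon>" using e1b[OF st] e2b[OF st] by linarith
        ultimately show "\<bar>exp s * (e1 s + e2 s)\<bar> \<le> exp T * (2*\<epsilon>)"
          unfolding abs_mult by (intro mult_mono) auto
      qed
      moreover have "Ny t - Nx t = exp(-t) * (psi t - psi 0)"
        unfolding psi_def Nx_def Ny_def N0_def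
        by (simp add: exp_minus field_simps)
      moreover have "exp(-t) \<le> 1" using t0 by simp
      ultimately have "\<bar>Ny t - Nx t\<bar> \<le> exp T * (2*\<epsilon>) * t"
      proof -
        assume F1: "\<bar>psi t - psi 0\<bar> \<le> exp T * (2*\<epsilon>) * (t - 0)"
          and eq: "Ny t - Nx t = exp(-t) * (psi t - psi 0)" and le: "exp(-t) \<le> 1"
        have "\<bar>Ny t - Nx t\<bar> = exp(-t) * \<bar>psi t - psi 0\<bar>" by (simp add: eq abs_mult)
        also have "\<dots> \<le> \<bar>psi t - psi 0\<bar>" by (rule mult_left_le_one_le) (use le in auto)
        also have "\<dots> \<le> exp T * (2*\<epsilon>) * t" using F1 by simp
        finally show ?thesis .
      qed
      also have "\<dots> \<le> exp T * (2*\<epsilon>) * T" using tT[OF t] eps by (intro mult_left_mono) auto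
      finally show ?thesis by (simp add: C1_def algebra_simps)
    qed
    have wbd: "\<bar>y t $2 - Ix t\<bar> \<le> (T*exp(4*T)*(C1+1)) * \<epsilon>" if t: "t\<in>tdom \<tau>" for t
    proof -
      have t0: "0 \<le> t" using tdom0[OF t] .
      define a where "a s = y s $1 - 1 - Ix s" for s
      have "continuous_on {0..t} (\<lambda>s. y s $1)"
        by (rule DERIV_continuous_on) (rule yd1[OF t])
      moreover have "continuous_on {0..t} Ix"
        by (rule DERIV_continuous_on[where D="\<lambda>s. Ix s*(Sx s - 1)"])
           (auto intro: has_field_derivative_at_within dI)
      ultimately have conta: "continuous_on {0..t} a" unfolding a_def[abs_def]
        by (intro continuous_on_diff continuous_on_const)
      have abd: "\<bar>a s\<bar> \<le> 2" if s: "s\<in>{0..t}" for s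
      proof -
        have st: "s\<in>tdom \<tau>" using subset[OF t] s by blast
        show ?thesis using yG[OF st] Ibd[of s] c s unfolding a_def by (auto simp: abs_le_iff)
      qed
      define P where "P u = integral {0..u} a" for u
      have dP: "(P has_real_derivative a s) (at s within {0..t})" if "s\<in>{0..t}" for s
        unfolding P_def[abs_def] by (rule integral_has_real_derivative[OF conta that])
      have Pbd: "\<bar>P s\<bar> \<le> 2*T" if s: "s\<in>{0..t}" for s
      proof -
        have s0: "0 \<le> s" using s by simp
        have "\<bar>P s - P 0\<bar> \<le> 2*(s-0)"
        proof (rule deriv_abs[OF s0])
          fix r assume r: "r \<in> {0..s}"
          have "continuous_on {0..s} a" using conta s by (auto intro: continuous_on_subset)
          then show "(P has_real_derivative a r) (at r within {0..s})"
            unfolding P_def[abs_def] by (rule integral_has_real_derivative[OF _ r])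
          show "\<bar>a r\<bar> \<le> 2" using abd r s by auto
        qed
        moreover have "P 0 = 0" by (simp add: P_def)
        ultimately show ?thesis using s tT[OF t] by auto
      qed
      define w where "w s = y s $2 - Ix s" for s
      define phi where "phi s = exp (- P s) * w s" for s
      have "\<bar>phi t - phi 0\<bar> \<le> (exp(2*T)*((C1+1)*\<epsilon>)) * (t-0)"
      proof (rule deriv_abs[OF t0])
        fix s assume s: "s\<in>{0..t}"
        have st: "s\<in>tdom \<tau>" using subset[OF t] s by blast
        have s0: "0 \<le> s" using s by simp
        have "(phi has_real_derivative (exp(-P s) * (-(a s))) * w s + (y' s $2 - Ix s*(Sx s - 1)) * exp(-P s)) (at s within {0..t})"
          unfolding phi_def[abs_def] w_def
          by (rule DERIV_mult[OF DERIV_chain2[OF DERIV_exp DERIV_minus[OF dP[OF s]]] DERIV_diff[OF yd2[OF t s] has_field_derivative_at_within[OF dI[OF s0]]]])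
        then show "(phi has_real_derivative exp(-P s) * (Ix s * (Ny s - Nx s) + e2 s)) (at s within {0..t})"
          by (rule DERIV_cong) (simp add: y'2 a_def w_def Ny_def Sx_def algebra_simps)
        have "exp(-P s) \<le> exp(2*T)" using Pbd[OF s] by simp
        moreover have "\<bar>Ix s * (Ny s - Nx s) + e2 s\<bar> \<le> (C1+1)*\<epsilon>"
        proof -
          have "\<bar>Ix s * (Ny s - Nx s)\<bar> \<le> 1 * (C1*\<epsilon>)"
            unfolding abs_mult using Ibd[OF s0] Dbd[OF st] by (intro mult_mono) auto
          thus ?thesis using e2b[OF st] by (simp add: algebra_simps)
        qed
        ultimately show "\<bar>exp(-P s) * (Ix s * (Ny s - Nx s) + e2 s)\<bar> \<le> exp(2*T)*((C1+1)*\<epsilon>)"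
          unfolding abs_mult by (intro mult_mono) auto
      qed
      moreover have "phi 0 = 0"
        unfolding phi_def w_def Ix_def E_def A_def F0 I0_def by simp
      ultimately have "\<bar>phi t\<bar> \<le> exp(2*T)*((C1+1)*\<epsilon>) * t" by simp
      also have "\<dots> \<le> exp(2*T)*((C1+1)*\<epsilon>) * T"
        using tT[OF t] C10 eps by (intro mult_left_mono) auto
      finally have ph: "\<bar>phi t\<bar> \<le> exp(2*T)*((C1+1)*\<epsilon>) * T" .
      have "w t = exp (P t) * phi t" unfolding phi_def by (simp add: exp_minus field_simps)
      hence "\<bar>w t\<bar> = exp (P t) * \<bar>phi t\<bar>" by (simp add: abs_mult)
      also have "\<dots> \<le> exp (2*T) * (exp(2*T)*((C1+1)*\<epsilon>) * T)"
        using Pbd[of t] t0 ph by (intro mult_mono) auto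
      also have "\<dots> = (T*exp(4*T)*(C1+1)) * \<epsilon>"
      proof -
        have "exp(2*T)*exp(2*T) = exp(4*T)" by (simp flip: exp_add)
        thus ?thesis by (metis (no_types, lifting) mult.assoc mult.commute)
      qed
      finally show ?thesis by (simp add: w_def)
    qed
    show ?thesis
    proof (intro exI[of _ x] conjI sol ballI)
      fix t assume t: "t \<in> tdom \<tau>"
      have "norm (x t - y t) \<le> \<bar>(x t - y t)$1\<bar> + \<bar>(x t - y t)$2\<bar>"
        using norm_le_l1_cart[of "x t - y t"] by (simp add: sum_2)
      also have "\<dots> \<le> (\<bar>Nx t - Ny t\<bar> + \<bar>y t $2 - Ix t\<bar>) + \<bar>y t $2 - Ix t\<bar>"
      proof -
        have q1: "(x t - y t)$1 = (Nx t - Ny t) + (y t $2 - Ix t)" by (simp add: x1 Sx_def Ny_def)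
        have q2: "(x t - y t)$2 = - (y t $2 - Ix t)" by (simp add: x2)
        show ?thesis unfolding q1 q2 abs_minus_cancel by (intro add_right_mono abs_triangle_ineq)
      qed
      also have "\<dots> \<le> (C1*\<epsilon> + (T*exp(4*T)*(C1+1)) * \<epsilon>) + (T*exp(4*T)*(C1+1)) * \<epsilon>"
        using Dbd[OF t] wbd[OF t] by (intro add_mono) (auto simp: abs_minus_commute[of "Nx t"])
      also have "\<dots> \<le> K*\<epsilon>"
      proof -
        have "K*\<epsilon> = \<epsilon> + ((C1*\<epsilon> + (T*exp(4*T)*(C1+1)) * \<epsilon>) + (T*exp(4*T)*(C1+1)) * \<epsilon>)"
          by (simp add: K_def algebra_simps)
        thus ?thesis using eps by linarith
      qed
      finally show "norm (x t - y t) \<le> K*\<epsilon>" .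
    qed
  qed
  show ?thesis unfolding cond_lip_shadowing_def
    apply (rule exI[of _ "c/4"])
    using c K0 main by auto
qed


theorem mainTheorem12:
  shows "(\<forall>c::real. 0 < c \<and> c < 1 \<longrightarrow> cond_lip_shadowing SI_field (Gamma_set c))
         \<and> \<not> cond_lip_shadowing SI_field (Gamma_set 0)"
  using part1 part2 by blast

end
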